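(* Consider the linear model $\mathbf{y}=\mathbf{X}\boldsymbol\beta+\boldsymbol\epsilon$, $\boldsymbol\epsilon\sim\mathrm{N}(\mathbf 0,\sigma^2\mathbf I_n)$, with $\mathbf X^\top\mathbf X=\mathbf I_p$, $\widehat{\boldsymbol\beta}^{\mathsf{LS}}=\mathbf X^\top\mathbf y$, and let $\alpha>0$. Let $\widehat{\boldsymbol\beta}=\arg\min_{\boldsymbol\beta}\tfrac12\|\mathbf y-\mathbf X\boldsymbol\beta\|_2^2+\gamma\sum_{j=1}^p w_j|\beta_j|$ with weights $w_j=\exp(-\alpha|\widehat\beta^{\mathsf{LS}}_j|)$ and $\gamma\in(\gamma_l,\gamma_{l+1})$ for consecutive transition points, and let $\mathcal A=\{j:\widehat\beta_j\neq0\}$. Then an unbiased estimate of the degrees of freedom of $\widehat{\mathbf y}_\gamma=\mathbf X\widehat{\boldsymbol\beta}$ is $$\widehat{df}_\gamma=|\mathcal A|+\gamma\sum_{j\in\mathcal A}\frac{\alpha}{\exp(\alpha|\widehat\beta^{\mathsf{LS}}_j|)}.$$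
   Context: Degrees of freedom of an estimator $\widehat{\mathbf y}$: $df(\widehat{\mathbf y})=\sigma^{-2}\sum_i\mathrm{Cov}(y_i,\widehat y_i)$ ($=\mathbb E[\mathrm{trace}(\partial\widehat{\mathbf y}/\partial\mathbf y)]$ by Stein's lemma); an unbiased estimate is a statistic with expectation $df(\widehat{\mathbf y})$. Transition points are the values $\gamma_1<\dots<\gamma_L$ of $\gamma>0$ at which the active set changes, for fixed data. *)

theory Defs
  imports "HOL-Probability.Probability"
begin

text \<open>Law of y = X beta + eps, eps ~ N(0, sd^2 I_n): independent normal coordinates
  with means mu = X beta and common standard deviation sd.\<close>
definition gauss_meas :: "real^'n \<Rightarrow> real \<Rightarrow> (real^'n) measure" where
  "gauss_meas mu sd =
     density lborel (\<lambda>x. ennreal (\<Prod>i\<in>UNIV. normal_density (mu $ i) sd (x $ i)))"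

definition covar :: "'a measure \<Rightarrow> ('a \<Rightarrow> real) \<Rightarrow> ('a \<Rightarrow> real) \<Rightarrow> real" where
  "covar M U V = (LINT x|M. (U x - (LINT z|M. U z)) * (V x - (LINT z|M. V z)))"

definition dof :: "(real^'n) measure \<Rightarrow> real \<Rightarrow> (real^'n \<Rightarrow> real^'n) \<Rightarrow> real" where
  "dof M sd yhat = (1 / sd^2) * (\<Sum>i\<in>UNIV. covar M (\<lambda>y. y $ i) (\<lambda>y. yhat y $ i))"

definition beta_LS :: "real^'p^'n \<Rightarrow> real^'n \<Rightarrow> real^'p" where
  "beta_LS X y = transpose X *v y"

definition alasso_obj :: "real^'p^'n \<Rightarrow> real \<Rightarrow> real \<Rightarrow> real^'n \<Rightarrow> real^'p \<Rightarrow> real" where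
  "alasso_obj X alpha gamma y b =
     (1/2) * (norm (y - X *v b))^2
     + gamma * (\<Sum>j\<in>UNIV. exp (- alpha * \<bar>beta_LS X y $ j\<bar>) * \<bar>b $ j\<bar>)"

definition active_set :: "real^'p \<Rightarrow> 'p set" where
  "active_set b = {j. b $ j \<noteq> 0}"

definition df_hat :: "real^'p^'n \<Rightarrow> real \<Rightarrow> real \<Rightarrow> (real^'n \<Rightarrow> real^'p) \<Rightarrow> real^'n \<Rightarrow> real" where
  "df_hat X alpha gamma betahat y =
     real (card (active_set (betahat y)))
     + gamma * (\<Sum>j\<in>active_set (betahat y). alpha / exp (alpha * \<bar>beta_LS X y $ j\<bar>))"

end

theory Submission
  imports Defs "HOL-Real_Asymp.Real_Asymp"
begin

lemma meas_chi[measurable]: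
  "(\<lambda>f. (\<chi> i. f i) :: real^'n) \<in> borel_measurable (Pi\<^sub>M UNIV (\<lambda>_::'n. lborel))"
proof -
  have "(\<lambda>f. ((\<chi> i. f i) :: real^'n) \<bullet> b) \<in> borel_measurable (Pi\<^sub>M UNIV (\<lambda>_::'n. lborel))" if b: "b \<in> Basis" for b
  proof -
    obtain k where k: "b = axis k 1" using b unfolding Basis_vec_def Basis_real_def by auto
    have "(\<lambda>f. ((\<chi> i. f i) :: real^'n) \<bullet> b) = (\<lambda>f. f k)"
      by (simp add: k inner_axis)
    then show ?thesis by (simp add: measurable_component_singleton)
  qed
  then show ?thesis by (subst borel_measurable_euclidean_space) auto
qed

lemma lborel_vec:
  "(lborel :: (real^'n) measure) = distr (Pi\<^sub>M UNIV (\<lambda>_::'n. lborel)) borel (\<lambda>f. \<chi> i. f i)"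
proof (rule lborel_eqI)
  interpret product_sigma_finite "\<lambda>_::'n. lborel" by standard
  fix l u :: "real^'n"
  assume le: "\<And>b. b \<in> Basis \<Longrightarrow> l \<bullet> b \<le> u \<bullet> b"
  have le': "l $ i \<le> u $ i" for i using le[of "axis i 1"] by (simp add: inner_axis)
  have pre: "(\<lambda>f. \<chi> i. f i) -` box l u \<inter> space (Pi\<^sub>M UNIV (\<lambda>_::'n. lborel)) = Pi\<^sub>E UNIV (\<lambda>i. {l$i<..<u$i})"
    by (auto simp: mem_box_cart space_PiM PiE_def extensional_def Pi_iff)
  have "emeasure (distr (Pi\<^sub>M UNIV (\<lambda>_::'n. lborel)) borel (\<lambda>f. \<chi> i. f i)) (box l u)
     = emeasure (Pi\<^sub>M UNIV (\<lambda>_::'n. lborel)) (Pi\<^sub>E UNIV (\<lambda>i. {l$i<..<u$i}))"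
    by (subst emeasure_distr) (simp_all add: pre)
  also have "\<dots> = (\<Prod>i\<in>UNIV. ennreal (u$i - l$i))"
    using le' by (subst emeasure_PiM) auto
  also have "\<dots> = ennreal (\<Prod>i\<in>UNIV. (u$i - l$i))"
    using le' by (simp add: prod_ennreal)
  also have "(\<Prod>i\<in>UNIV. (u$i - l$i)) = (\<Prod>b\<in>Basis. (u - l) \<bullet> b)"
  proof -
    have B: "Basis = (\<lambda>i. axis i (1::real)) ` (UNIV :: 'n set)"
      by (auto simp: Basis_vec_def)
    have I: "inj (\<lambda>i. axis i (1::real) :: real^'n)"
      by (auto simp: inj_def axis_eq_axis)
    have "(\<Prod>b\<in>Basis. (u - l) \<bullet> b) = (\<Prod>i\<in>UNIV. (u - l) \<bullet> axis i (1::real))"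
      by (simp only: B prod.reindex[OF I] o_def)
    then show ?thesis by (simp add: inner_axis)
  qed
  finally show "emeasure (distr (Pi\<^sub>M UNIV (\<lambda>_::'n. lborel)) borel (\<lambda>f. \<chi> i. f i)) (box l u) = (\<Prod>b\<in>Basis. (u - l) \<bullet> b)" .
next
  show "sets (distr (Pi\<^sub>M UNIV (\<lambda>_::'n. lborel)) borel (\<lambda>f. \<chi> i. f i)) = sets (borel :: (real^'n) measure)"
    by (rule sets_distr)
qed

definition Nm :: "real^'n \<Rightarrow> real \<Rightarrow> 'n \<Rightarrow> real measure" where
  "Nm mu sd i = density lborel (\<lambda>x. ennreal (normal_density (mu$i) sd x))"

lemma prob_Nm: "sd > 0 \<Longrightarrow> prob_space (Nm mu sd i)"
  unfolding Nm_def by (rule prob_space_normal_density)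

lemma sets_Nm[simp, measurable_cong]: "sets (Nm mu sd i) = sets borel"
  unfolding Nm_def by simp

lemma space_Nm[simp]: "space (Nm mu sd i) = UNIV"
  unfolding Nm_def by simp

lemma density_PiM_normal:
  assumes sd: "sd > 0"
  shows "density (Pi\<^sub>M UNIV (\<lambda>_::'n::finite. lborel)) (\<lambda>f. ennreal (\<Prod>i\<in>UNIV. normal_density (mu$i) sd (f i)))
   = Pi\<^sub>M UNIV (Nm mu sd)"
proof -
  interpret product_sigma_finite "Nm mu sd"
    unfolding product_sigma_finite_def using prob_Nm[OF sd] by (metis prob_space_imp_sigma_finite)
  interpret L: product_sigma_finite "\<lambda>_::'n. lborel" by standard
  show ?thesis
  proof (rule PiM_eqI)
    show "finite (UNIV :: 'n set)" by simp
    show "sets (density (Pi\<^sub>M UNIV (\<lambda>_::'n. lborel)) (\<lambda>f. ennreal (\<Prod>i\<in>UNIV. normal_density (mu$i) sd (f i))))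
       = sets (Pi\<^sub>M UNIV (Nm mu sd))"
      unfolding sets_density by (rule sets_PiM_cong) auto
    fix A assume A: "\<And>i. i \<in> UNIV \<Longrightarrow> A i \<in> sets (Nm mu sd i)"
    have mA[measurable]: "A i \<in> sets borel" for i using A[of i] by simp
    have "emeasure (density (Pi\<^sub>M UNIV (\<lambda>_::'n. lborel)) (\<lambda>f. ennreal (\<Prod>i\<in>UNIV. normal_density (mu$i) sd (f i)))) (Pi\<^sub>E UNIV A)
       = (\<integral>\<^sup>+ f. (\<Prod>i\<in>UNIV. ennreal (normal_density (mu$i) sd (f i)) * indicator (A i) (f i)) \<partial>Pi\<^sub>M UNIV (\<lambda>_::'n. lborel))"
    proof -
      have PA: "Pi\<^sub>E UNIV A \<in> sets (Pi\<^sub>M UNIV (\<lambda>_::'n. lborel))"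
        by (rule sets_PiM_I_finite) auto
      have eq: "ennreal (\<Prod>i\<in>UNIV. normal_density (mu$i) sd (f i)) * indicator (Pi\<^sub>E UNIV A) f
          = (\<Prod>i\<in>UNIV. ennreal (normal_density (mu$i) sd (f i)) * indicator (A i) (f i))" for f
      proof -
        have "indicator (Pi\<^sub>E UNIV A) f = (\<Prod>i\<in>UNIV. indicator (A i) (f i) :: ennreal)"
        proof (cases "f \<in> Pi\<^sub>E UNIV A")
          case True then show ?thesis by (auto simp: indicator_def PiE_def intro!: prod.neutral)
        next
          case False
          then obtain j where "f j \<notin> A j" by (auto simp: PiE_def)
          then have "(\<Prod>i\<in>UNIV. indicator (A i) (f i) :: ennreal) = 0"
            by (intro prod_zero) (auto intro!: exI[of _ j])
          with False show ?thesis by simp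
        qed
        then show ?thesis
          by (simp add: prod.distrib prod_ennreal normal_density_nonneg)
      qed
      show ?thesis
        by (subst emeasure_density[OF _ PA]) (auto simp: eq)
    qed
    also have "\<dots> = (\<Prod>i\<in>UNIV. \<integral>\<^sup>+ x. ennreal (normal_density (mu$i) sd x) * indicator (A i) x \<partial>lborel)"
      by (rule L.product_nn_integral_prod) auto
    also have "\<dots> = (\<Prod>i\<in>UNIV. emeasure (Nm mu sd i) (A i))"
      unfolding Nm_def by (simp add: emeasure_density)
    finally show "emeasure (density (Pi\<^sub>M UNIV (\<lambda>_::'n. lborel)) (\<lambda>f. ennreal (\<Prod>i\<in>UNIV. normal_density (mu$i) sd (f i)))) (Pi\<^sub>E UNIV A)
       = (\<Prod>i\<in>UNIV. emeasure (Nm mu sd i) (A i))" .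
  qed
qed

lemma gauss_meas_distr:
  fixes mu :: "real^'n::finite"
  assumes sd: "sd > 0"
  shows "gauss_meas mu sd = distr (Pi\<^sub>M UNIV (Nm mu sd)) borel (\<lambda>f. \<chi> i. f i)"
proof -
  have "gauss_meas mu sd = density (distr (Pi\<^sub>M UNIV (\<lambda>_::'n. lborel)) borel (\<lambda>f. \<chi> i. f i))
          (\<lambda>x. ennreal (\<Prod>i\<in>UNIV. normal_density (mu $ i) sd (x $ i)))"
    unfolding gauss_meas_def by (simp add: lborel_vec[symmetric])
  also have "\<dots> = distr (density (Pi\<^sub>M UNIV (\<lambda>_::'n. lborel)) (\<lambda>f. ennreal (\<Prod>i\<in>UNIV. normal_density (mu$i) sd (f i)))) borel (\<lambda>f. \<chi> i. f i)"
    by (subst density_distr) auto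
  also have "\<dots> = distr (Pi\<^sub>M UNIV (Nm mu sd)) borel (\<lambda>f. \<chi> i. f i)"
    by (simp add: density_PiM_normal[OF sd])
  finally show ?thesis .
qed

lemma prob_gauss:
  fixes mu :: "real^'n::finite"
  assumes sd: "sd > 0"
  shows "prob_space (gauss_meas mu sd)"
proof -
  interpret P: prob_space "Pi\<^sub>M UNIV (Nm mu sd)"
    by (rule prob_space_PiM) (rule prob_Nm[OF sd])
  show ?thesis unfolding gauss_meas_distr[OF sd]
    by (rule P.prob_space_distr) simp
qed

lemma sets_gauss[simp, measurable_cong]: "sets (gauss_meas mu sd) = sets borel"
  unfolding gauss_meas_def by simp

lemma space_gauss[simp]: "space (gauss_meas mu sd) = UNIV"
  unfolding gauss_meas_def by simp

lemma distr_gauss_comp: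
  fixes mu :: "real^'n::finite"
  assumes sd: "sd > 0"
  shows "distr (gauss_meas mu sd) lborel (\<lambda>y. y $ i) = Nm mu sd i"
proof -
  have "distr (gauss_meas mu sd) lborel (\<lambda>y. y $ i)
      = distr (Pi\<^sub>M UNIV (Nm mu sd)) lborel (\<lambda>f. f i)"
    unfolding gauss_meas_distr[OF sd]
    by (subst distr_distr) (auto simp: comp_def)
  also have "\<dots> = distr (Pi\<^sub>M UNIV (Nm mu sd)) (Nm mu sd i) (\<lambda>f. f i)"
    by (rule distr_cong) auto
  also have "\<dots> = Nm mu sd i"
    by (rule distr_PiM_component) (auto intro: prob_Nm[OF sd])
  finally show ?thesis .
qed

lemma distributed_gauss_comp:
  fixes mu :: "real^'n::finite"
  assumes sd: "sd > 0"
  shows "distributed (gauss_meas mu sd) lborel (\<lambda>y. y $ i) (\<lambda>x. ennreal (normal_density (mu$i) sd x))"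
  unfolding distributed_def
  by (auto simp: distr_gauss_comp[OF sd] Nm_def)

lemma indep_gauss:
  fixes mu :: "real^'n::finite"
  assumes sd: "sd > 0"
  shows "prob_space.indep_vars (gauss_meas mu sd) (\<lambda>_. borel) (\<lambda>i y. y $ i) UNIV"
proof -
  interpret G: prob_space "gauss_meas mu sd" by (rule prob_gauss[OF sd])
  show ?thesis
  proof (subst G.indep_vars_iff_distr_eq_PiM)
    show "distr (gauss_meas mu sd) (Pi\<^sub>M UNIV (\<lambda>_. borel)) (\<lambda>x. \<lambda>i\<in>UNIV. x $ i)
        = Pi\<^sub>M UNIV (\<lambda>i. distr (gauss_meas mu sd) borel (\<lambda>x. x $ i))"
    proof -
      have "distr (gauss_meas mu sd) (Pi\<^sub>M UNIV (\<lambda>_. borel)) (\<lambda>x. \<lambda>i\<in>UNIV. x $ i)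
          = distr (Pi\<^sub>M UNIV (Nm mu sd)) (Pi\<^sub>M UNIV (\<lambda>_. borel)) (\<lambda>f. f)"
      proof -
        have m: "(\<lambda>x::real^'n. \<lambda>i. x $ i) \<in> borel \<rightarrow>\<^sub>M Pi\<^sub>M UNIV (\<lambda>_. borel)"
          by (rule measurable_PiM_single') auto
        show ?thesis
          unfolding gauss_meas_distr[OF sd]
          by (subst distr_distr) (auto simp: comp_def restrict_UNIV m vec_lambda_inverse)
      qed
      also have "\<dots> = Pi\<^sub>M UNIV (Nm mu sd)"
        by (rule distr_id2) (rule sets_PiM_cong, auto)
      also have "\<dots> = Pi\<^sub>M UNIV (\<lambda>i. distr (gauss_meas mu sd) borel (\<lambda>x. x $ i))"
      proof (rule PiM_cong)
        fix i :: 'n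
        have "distr (gauss_meas mu sd) borel (\<lambda>x. x $ i) = distr (gauss_meas mu sd) lborel (\<lambda>x. x $ i)"
          by (rule distr_cong) auto
        then show "Nm mu sd i = distr (gauss_meas mu sd) borel (\<lambda>x. x $ i)"
          by (simp add: distr_gauss_comp[OF sd])
      qed simp
      finally show ?thesis .
    qed
  qed auto
qed

lemma lin_normal:
  fixes mu :: "real^'n::finite" and v :: "'n \<Rightarrow> real"
  assumes sd: "sd > 0" and v1: "(\<Sum>i\<in>UNIV. (v i)^2) = 1"
  shows "distributed (gauss_meas mu sd) lborel (\<lambda>y. \<Sum>i\<in>UNIV. v i * y $ i)
           (\<lambda>x. ennreal (normal_density (\<Sum>i\<in>UNIV. v i * mu $ i) sd x))"
proof -
  interpret G: prob_space "gauss_meas mu sd" by (rule prob_gauss[OF sd])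
  define I where "I = {i. v i \<noteq> 0}"
  have I0: "I \<noteq> {}"
  proof
    assume "I = {}"
    then have "\<And>i. v i = 0" by (auto simp: I_def)
    with v1 show False by simp
  qed
  have sumI: "(\<Sum>i\<in>UNIV. f i) = (\<Sum>i\<in>I. f i)" if "\<And>i. v i = 0 \<Longrightarrow> f i = 0" for f :: "'n \<Rightarrow> real"
    by (rule sum.mono_neutral_right) (auto simp: I_def that)
  have d: "distributed (gauss_meas mu sd) lborel (\<lambda>y. v i * y $ i)
             (\<lambda>x. ennreal (normal_density (v i * mu $ i) (\<bar>v i\<bar> * sd) x))" if "i \<in> I" for i
    using G.normal_density_affine[OF distributed_gauss_comp[OF sd, of mu i] sd, of "v i" 0] that
    by (simp add: I_def)
  have ind: "G.indep_vars (\<lambda>_. borel) (\<lambda>i y. v i * y $ i) I"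
    using G.indep_vars_compose2[OF G.indep_vars_subset[OF indep_gauss[OF sd, of mu], of I], of "\<lambda>i x. v i * x" "\<lambda>_. borel"]
    by auto
  have "distributed (gauss_meas mu sd) lborel (\<lambda>y. \<Sum>i\<in>I. v i * y $ i)
           (\<lambda>x. ennreal (normal_density (\<Sum>i\<in>I. v i * mu $ i) (sqrt (\<Sum>i\<in>I. (\<bar>v i\<bar> * sd)\<^sup>2)) x))"
    by (rule G.sum_indep_normal[OF _ I0 ind _ d]) (auto simp: I_def sd)
  moreover have "sqrt (\<Sum>i\<in>I. (\<bar>v i\<bar> * sd)\<^sup>2) = sd"
  proof -
    have "(\<Sum>i\<in>I. (\<bar>v i\<bar> * sd)\<^sup>2) = sd^2 * (\<Sum>i\<in>I. (v i)^2)"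
      by (simp add: sum_distrib_left power_mult_distrib mult.commute)
    also have "(\<Sum>i\<in>I. (v i)^2) = 1" using v1 sumI[of "\<lambda>i. (v i)^2"] by simp
    finally show ?thesis using sd by simp
  qed
  moreover have "(\<lambda>y. \<Sum>i\<in>I. v i * y $ i) = (\<lambda>y. \<Sum>i\<in>UNIV. v i * y $ i)"
    using sumI by auto
  moreover have "(\<Sum>i\<in>I. v i * mu $ i) = (\<Sum>i\<in>UNIV. v i * mu $ i)"
    using sumI by auto
  ultimately show ?thesis by simp
qed

definition soft :: "real \<Rightarrow> real \<Rightarrow> real" where
  "soft c z = (if \<bar>z\<bar> \<le> c then 0 else if z > 0 then z - c else z + c)"

lemma soft_opt:
  assumes c: "c \<ge> 0"
  shows "x^2/2 - z * x + c*\<bar>x\<bar> - ((soft c z)^2/2 - z * soft c z + c*\<bar>soft c z\<bar>) \<ge> (x - soft c z)^2/2"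
proof (cases "\<bar>z\<bar> \<le> c")
  case True
  have 1: "z * x \<le> \<bar>z\<bar> * \<bar>x\<bar>" by (metis abs_ge_self abs_mult)
  have 2: "\<bar>z\<bar> * \<bar>x\<bar> \<le> c * \<bar>x\<bar>" by (rule mult_right_mono) (use True in auto)
  have S: "soft c z = 0" using True by (simp add: soft_def)
  show ?thesis unfolding S using 1 2 by simp
next
  case False
  show ?thesis
  proof (cases "z > 0")
    case True
    then have S: "soft c z = z - c" using False by (simp add: soft_def)
    have zc: "z - c > 0" using False True by auto
    show ?thesis
    proof (cases "x \<ge> 0")
      case True
      then have "\<bar>x\<bar> = x" "\<bar>z - c\<bar> = z - c" using zc by auto
      then show ?thesis unfolding S by (simp add: power2_eq_square field_simps)
    next
      case False
      then have ax: "\<bar>x\<bar> = -x" "\<bar>z - c\<bar> = z - c" using zc by auto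
      have cx: "c * x \<le> 0" using c False by (simp add: mult_nonneg_nonpos)
      have "x^2/2 - z * x + c*\<bar>x\<bar> - ((z - c)^2/2 - z * (z - c) + c*\<bar>z - c\<bar>) - (x - (z - c))^2/2 = -2*c*x"
        unfolding ax by (simp add: power2_eq_square field_simps)
      then show ?thesis unfolding S using cx by linarith
    qed
  next
    case zneg: False
    then have S: "soft c z = z + c" using False by (simp add: soft_def)
    have zc: "z + c < 0" using False zneg by auto
    show ?thesis
    proof (cases "x \<le> 0")
      case True
      then have "\<bar>x\<bar> = -x" "\<bar>z + c\<bar> = -(z + c)" using zc by auto
      then show ?thesis unfolding S by (simp add: power2_eq_square field_simps)
    next
      case False
      then have ax: "\<bar>x\<bar> = x" "\<bar>z + c\<bar> = -(z + c)" using zc by auto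
      have cx: "c * x \<ge> 0" using c False by simp
      have "x^2/2 - z * x + c*\<bar>x\<bar> - ((z + c)^2/2 - z * (z + c) + c*\<bar>z + c\<bar>) - (x - (z + c))^2/2 = 2*c*x"
        unfolding ax by (simp add: power2_eq_square field_simps)
      then show ?thesis unfolding S using cx by linarith
    qed
  qed
qed

lemma obj_sep:
  fixes X :: "real^'p^'n"
  assumes XX: "transpose X ** X = mat 1"
  shows "alasso_obj X alpha gamma y b = (y \<bullet> y)/2 +
     (\<Sum>j\<in>UNIV. (b$j)^2/2 - (transpose X *v y)$j * b$j
        + gamma * exp (- alpha * \<bar>(transpose X *v y)$j\<bar>) * \<bar>b$j\<bar>)"
proof -
  have n: "(norm (y - X *v b))^2 = y \<bullet> y - 2 * (y \<bullet> (X *v b)) + (X *v b) \<bullet> (X *v b)"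
    by (simp add: power2_norm_eq_inner inner_diff_left inner_diff_right inner_commute)
  have a: "y \<bullet> (X *v b) = (transpose X *v y) \<bullet> b"
    by (simp add: dot_lmul_matrix[symmetric])
  have c: "(X *v b) \<bullet> (X *v b) = b \<bullet> b"
  proof -
    have "(X *v b) \<bullet> (X *v b) = (transpose X *v (X *v b)) \<bullet> b"
      by (simp add: dot_lmul_matrix[symmetric])
    also have "\<dots> = b \<bullet> b" by (simp add: matrix_vector_mul_assoc XX)
    finally show ?thesis .
  qed
  define z where "z = transpose X *v y"
  have s1: "(\<Sum>j\<in>UNIV. (b$j)^2/2 - z$j * b$j + gamma * exp (- alpha * \<bar>z$j\<bar>) * \<bar>b$j\<bar>)
     = (\<Sum>j\<in>UNIV. (b$j)^2)/2 - (\<Sum>j\<in>UNIV. z$j * b$j) + gamma * (\<Sum>j\<in>UNIV. exp (- alpha * \<bar>z$j\<bar>) * \<bar>b$j\<bar>)"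
    by (simp add: sum.distrib sum_subtractf sum_divide_distrib sum_distrib_left mult.assoc)
  have s2: "b \<bullet> b = (\<Sum>j\<in>UNIV. (b$j)^2)" by (simp add: inner_vec_def power2_eq_square)
  have s3: "z \<bullet> b = (\<Sum>j\<in>UNIV. z$j * b$j)" by (simp add: inner_vec_def)
  show ?thesis
    unfolding alasso_obj_def beta_LS_def n a c z_def[symmetric] s1 s2 s3
    by (simp add: field_simps)
qed

lemma betahat_soft:
  fixes X :: "real^'p^'n"
  assumes XX: "transpose X ** X = mat 1" and g: "gamma > 0"
    and opt: "\<And>y b. alasso_obj X alpha gamma y (betahat y) \<le> alasso_obj X alpha gamma y b"
  shows "betahat y $ j = soft (gamma * exp (- alpha * \<bar>(transpose X *v y)$j\<bar>)) ((transpose X *v y)$j)"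
proof -
  define z where "z = transpose X *v y"
  define psi where "psi k x = x^2/2 - z$k * x + gamma * exp (- alpha * \<bar>z$k\<bar>) * \<bar>x\<bar>" for k x
  define S where "S = soft (gamma * exp (- alpha * \<bar>z$j\<bar>)) (z$j)"
  define bh where "bh = betahat y"
  define b' where "b' = (\<chi> k. if k = j then S else bh $ k)"
  have obj: "alasso_obj X alpha gamma y b = (y \<bullet> y)/2 + (\<Sum>k\<in>UNIV. psi k (b$k))" for b
    unfolding obj_sep[OF XX] psi_def z_def by (simp add: algebra_simps)
  have split: "(\<Sum>k\<in>UNIV. psi k (b$k)) = psi j (b$j) + (\<Sum>k\<in>UNIV-{j}. psi k (b$k))" for b
    by (simp add: sum.remove)
  have rest: "(\<Sum>k\<in>UNIV-{j}. psi k (b'$k)) = (\<Sum>k\<in>UNIV-{j}. psi k (bh$k))"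
    by (rule sum.cong) (auto simp: b'_def)
  have ob: "alasso_obj X alpha gamma y bh \<le> alasso_obj X alpha gamma y b'"
    unfolding bh_def by (rule opt)
  have le: "psi j (bh$j) \<le> psi j S" if "alasso_obj X alpha gamma y bh \<le> alasso_obj X alpha gamma y b'"
  proof -
    have bj: "b'$j = S" by (simp add: b'_def)
    show ?thesis using that unfolding obj split[of bh] split[of b'] rest bj by linarith
  qed
  have "psi j (bh$j) - psi j S \<ge> (bh$j - S)^2/2"
  proof -
    have c0: "gamma * exp (- alpha * \<bar>z$j\<bar>) \<ge> 0" using g by simp
    show ?thesis using soft_opt[OF c0, of "bh$j" "z$j"] unfolding psi_def S_def by linarith
  qed
  with le[OF ob] have "(bh$j - S)^2 \<le> 0" by linarith
  then show ?thesis unfolding bh_def S_def z_def by simp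
qed

lemma normal_density_deriv:
  assumes sd: "sd > 0"
  shows "(normal_density m sd has_real_derivative (- normal_density m sd x * (x - m) / sd^2)) (at x)"
proof -
  define c where "c = 1 / sqrt (2 * pi * sd\<^sup>2)"
  have nd: "normal_density m sd = (\<lambda>x. c * exp (-(x - m)\<^sup>2/ (2 * sd\<^sup>2)))"
    unfolding c_def normal_density_def[abs_def] by simp
  have "((\<lambda>x. c * exp (-(x - m)\<^sup>2/ (2 * sd\<^sup>2))) has_real_derivative
        c * (exp (-(x - m)\<^sup>2/ (2 * sd\<^sup>2)) * (- (2 * (x - m) * 1) / (2 * sd\<^sup>2)))) (at x)"
    using sd by (auto intro!: derivative_eq_intros simp: power2_eq_square field_simps)
  moreover have "c * (exp (-(x - m)\<^sup>2/ (2 * sd\<^sup>2)) * (- (2 * (x - m) * 1) / (2 * sd\<^sup>2)))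
      = - (c * exp (-(x - m)\<^sup>2/ (2 * sd\<^sup>2))) * (x - m) / sd^2"
    using sd by (simp add: field_simps)
  ultimately show ?thesis unfolding nd by simp
qed

lemma stein_piece:
  fixes G G' :: "real \<Rightarrow> real" and a b :: ereal
  assumes sd: "sd > 0" and ab: "a < b"
    and D: "\<And>x. a < ereal x \<Longrightarrow> ereal x < b \<Longrightarrow> (G has_real_derivative G' x) (at x)"
    and C: "\<And>x. a < ereal x \<Longrightarrow> ereal x < b \<Longrightarrow> isCont G' x"
    and I1: "interval_lebesgue_integrable lborel a b (\<lambda>z. normal_density m sd z * (z - m) * G z)"
    and I2: "interval_lebesgue_integrable lborel a b (\<lambda>z. normal_density m sd z * G' z)"
    and LA: "(((\<lambda>z. G z * normal_density m sd z) \<circ> real_of_ereal) \<longlongrightarrow> 0) (at_right a)"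
    and LB: "(((\<lambda>z. G z * normal_density m sd z) \<circ> real_of_ereal) \<longlongrightarrow> 0) (at_left b)"
  shows "(LBINT z=a..b. normal_density m sd z * (z - m) * G z) = sd^2 * (LBINT z=a..b. normal_density m sd z * G' z)"
proof -
  define h where "h z = normal_density m sd z * G' z - normal_density m sd z * (z - m) * G z / sd^2" for z
  have Ih: "interval_lebesgue_integrable lborel a b h"
    unfolding h_def using I1 I2 by (intro interval_lebesgue_integral_diff) auto
  have "(LBINT z=a..b. h z) = 0 - 0"
  proof (rule interval_integral_FTC_integrable[OF ab])
    fix x assume x: "a < ereal x" "ereal x < b"
    have "((\<lambda>z. G z * normal_density m sd z) has_real_derivative
           G' x * normal_density m sd x + (- normal_density m sd x * (x - m) / sd^2) * G x) (at x)"
      by (rule DERIV_mult[OF D[OF x] normal_density_deriv[OF sd]])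
    moreover have "G' x * normal_density m sd x + (- normal_density m sd x * (x - m) / sd^2) * G x = h x"
      unfolding h_def using sd by (simp add: field_simps)
    ultimately show "((\<lambda>z. G z * normal_density m sd z) has_vector_derivative h x) (at x)"
      by (simp add: has_real_derivative_iff_has_vector_derivative)
    have cG: "isCont G x" using D[OF x] by (rule DERIV_isCont)
    have cN: "isCont (normal_density m sd) x" using normal_density_deriv[OF sd] by (rule DERIV_isCont)
    show "isCont h x" unfolding h_def[abs_def]
      using cG cN C[OF x] sd by (intro continuous_intros) auto
  next
    show "set_integrable lborel (einterval a b) h"
      using Ih ab by (simp add: interval_lebesgue_integrable_def)
  qed (use LA LB in auto)
  then have "(LBINT z=a..b. normal_density m sd z * G' z) - (LBINT z=a..b. normal_density m sd z * (z - m) * G z) / sd^2 = 0"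
  proof -
    have "(LBINT z=a..b. h z) = (LBINT z=a..b. normal_density m sd z * G' z) - (LBINT z=a..b. normal_density m sd z * (z - m) * G z / sd^2)"
      unfolding h_def using I1 I2 by (intro interval_lebesgue_integral_diff(2)) auto
    then show ?thesis using \<open>(LBINT z=a..b. h z) = 0 - 0\<close> by simp
  qed
  then show ?thesis using sd by (simp add: field_simps)
qed

definition gfun :: "real \<Rightarrow> real \<Rightarrow> real \<Rightarrow> real" where
  "gfun a gam z = soft (gam * exp (- a * \<bar>z\<bar>)) z"

definition qfun :: "real \<Rightarrow> real \<Rightarrow> real \<Rightarrow> real" where
  "qfun a gam z = (if gfun a gam z \<noteq> 0 then 1 + gam * (a / exp (a * \<bar>z\<bar>)) else 0)"

lemma gfun_meas[measurable]: "gfun a gam \<in> borel_measurable borel"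
  unfolding gfun_def[abs_def] soft_def by measurable

lemma qfun_meas[measurable]: "qfun a gam \<in> borel_measurable borel"
  unfolding qfun_def[abs_def] by measurable

lemma abs_soft: "c \<ge> 0 \<Longrightarrow> \<bar>soft c z\<bar> \<le> \<bar>z\<bar>"
  by (auto simp: soft_def)

lemma abs_gfun: "gam \<ge> 0 \<Longrightarrow> \<bar>gfun a gam z\<bar> \<le> \<bar>z\<bar>"
  unfolding gfun_def by (rule abs_soft) simp

lemma qfun_bound: "gam \<ge> 0 \<Longrightarrow> a \<ge> 0 \<Longrightarrow> \<bar>qfun a gam z\<bar> \<le> 1 + gam * a"
proof -
  assume g: "gam \<ge> 0" and a: "a \<ge> 0"
  have "a / exp (a * \<bar>z\<bar>) \<le> a"
    using a by (simp add: divide_le_eq mult_le_cancel_left1)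
  then have "gam * (a / exp (a * \<bar>z\<bar>)) \<le> gam * a" using g by (rule mult_left_mono)
  moreover have "gam * (a / exp (a * \<bar>z\<bar>)) \<ge> 0" using g a by simp
  ultimately show ?thesis using g a by (auto simp: qfun_def)
qed

lemma threshold:
  assumes a: "a > 0" and g: "gam > 0"
  obtains t where "t > 0" "t = gam * exp (- a * t)"
    "\<And>z. gfun a gam z = 0 \<longleftrightarrow> \<bar>z\<bar> \<le> t"
    "\<And>z. z > t \<Longrightarrow> gfun a gam z = z - gam * exp (- a * z)"
    "\<And>z. z < - t \<Longrightarrow> gfun a gam z = z + gam * exp (a * z)"
proof -
  define h where "h s = s - gam * exp (- a * s)" for s
  have mono: "h s < h s'" if "s < s'" for s s'
  proof -
    have "exp (- a * s') < exp (- a * s)" using that a by simp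
    then have "gam * exp (- a * s') < gam * exp (- a * s)" using g by simp
    then show ?thesis using that by (simp add: h_def)
  qed
  have "\<exists>t\<ge>0. t \<le> gam \<and> h t = 0"
  proof (rule IVT)
    show "h 0 \<le> 0" using g by (simp add: h_def)
    have "exp (- a * gam) \<le> 1" using a g by simp
    then have "gam * exp (- a * gam) \<le> gam" using g by (simp add: mult_left_le)
    then show "0 \<le> h gam" by (simp add: h_def)
    show "0 \<le> gam" using g by simp
    show "\<forall>x. 0 \<le> x \<and> x \<le> gam \<longrightarrow> isCont h x"
      unfolding h_def by (auto intro!: continuous_intros)
  qed
  then obtain t where t0: "t \<ge> 0" and ht: "h t = 0" by blast
  have tpos: "t > 0"
  proof (rule ccontr)
    assume "\<not> t > 0" then have "t = 0" using t0 by simp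
    with ht g show False by (simp add: h_def)
  qed
  have teq: "t = gam * exp (- a * t)" using ht by (simp add: h_def)
  have hle: "h s \<le> 0 \<longleftrightarrow> s \<le> t" for s
  proof
    assume "h s \<le> 0" show "s \<le> t"
    proof (rule ccontr)
      assume "\<not> s \<le> t" then have "h t < h s" by (intro mono) simp
      with ht \<open>h s \<le> 0\<close> show False by simp
    qed
  next
    assume "s \<le> t" then show "h s \<le> 0"
      using mono[of s t] ht by (cases "s = t") auto
  qed
  have zero: "gfun a gam z = 0 \<longleftrightarrow> \<bar>z\<bar> \<le> t" for z
  proof -
    have "gfun a gam z = 0 \<longleftrightarrow> \<bar>z\<bar> \<le> gam * exp (- a * \<bar>z\<bar>)"
      unfolding gfun_def soft_def by auto
    also have "\<dots> \<longleftrightarrow> h \<bar>z\<bar> \<le> 0" by (simp add: h_def)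
    also have "\<dots> \<longleftrightarrow> \<bar>z\<bar> \<le> t" by (rule hle)
    finally show ?thesis .
  qed
  have pos: "gfun a gam z = z - gam * exp (- a * z)" if "z > t" for z
  proof -
    have "\<not> \<bar>z\<bar> \<le> gam * exp (- a * \<bar>z\<bar>)" using zero[of z] that tpos
      unfolding gfun_def soft_def by (auto split: if_splits)
    then show ?thesis using that tpos unfolding gfun_def soft_def by auto
  qed
  have neg: "gfun a gam z = z + gam * exp (a * z)" if "z < - t" for z
  proof -
    have "\<not> \<bar>z\<bar> \<le> gam * exp (- a * \<bar>z\<bar>)" using zero[of z] that tpos
      unfolding gfun_def soft_def by (auto split: if_splits)
    then show ?thesis using that tpos unfolding gfun_def soft_def by auto
  qed
  show ?thesis by (rule that[OF tpos teq zero pos neg])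
qed

lemma LBINT_right:
  fixes f :: "real \<Rightarrow> real"
  shows "(LBINT z=ereal t..\<infinity>. f z) = (\<integral>z. indicator {t<..} z * f z \<partial>lborel)"
  by (simp add: interval_integral_to_infinity_eq set_lebesgue_integral_def)

lemma einterval_left: "einterval (-\<infinity>) (ereal t) = {..<t}"
  by (auto simp: einterval_def)

lemma einterval_right: "einterval (ereal t) \<infinity> = {t<..}"
  by (auto simp: einterval_def)

lemma LBINT_left:
  fixes f :: "real \<Rightarrow> real"
  shows "(LBINT z=-\<infinity>..ereal t. f z) = (\<integral>z. indicator {..<t} z * f z \<partial>lborel)"
  by (simp add: interval_lebesgue_integral_def einterval_left set_lebesgue_integral_def)

lemma int_right:
  fixes f :: "real \<Rightarrow> real"
  shows "interval_lebesgue_integrable lborel (ereal t) \<infinity> f \<longleftrightarrow> integrable lborel (\<lambda>z. indicator {t<..} z * f z)"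
  by (simp add: interval_lebesgue_integrable_def einterval_right set_integrable_def)

lemma int_left:
  fixes f :: "real \<Rightarrow> real"
  shows "interval_lebesgue_integrable lborel (-\<infinity>) (ereal t) f \<longleftrightarrow> integrable lborel (\<lambda>z. indicator {..<t} z * f z)"
  by (simp add: interval_lebesgue_integrable_def einterval_left set_integrable_def)

lemma stein_full:
  assumes sd: "sd > 0" and a: "a > 0" and g: "gam > 0"
  shows "integrable lborel (\<lambda>z. normal_density m sd z * ((z - m) * gfun a gam z))"
    and "integrable lborel (\<lambda>z. normal_density m sd z * qfun a gam z)"
    and "(\<integral>z. normal_density m sd z * ((z - m) * gfun a gam z) \<partial>lborel)
           = sd^2 * (\<integral>z. normal_density m sd z * qfun a gam z \<partial>lborel)"
proof -
  let ?phi = "normal_density m sd"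
  define P where "P z = ?phi z * ((z - m) * gfun a gam z)" for z
  define Q where "Q z = ?phi z * qfun a gam z" for z
  obtain t where t0: "t > 0" and teq: "t = gam * exp (- a * t)"
    and zero: "\<And>z. gfun a gam z = 0 \<longleftrightarrow> \<bar>z\<bar> \<le> t"
    and pos: "\<And>z. z > t \<Longrightarrow> gfun a gam z = z - gam * exp (- a * z)"
    and neg: "\<And>z. z < - t \<Longrightarrow> gfun a gam z = z + gam * exp (a * z)"
    using threshold[OF a g] by blast
  have phi0: "?phi z \<ge> 0" for z using normal_density_nonneg .
  show IP: "integrable lborel (\<lambda>z. ?phi z * ((z - m) * gfun a gam z))"
  proof (rule Bochner_Integration.integrable_bound)
    show "integrable lborel (\<lambda>z. ?phi z * \<bar>z - m\<bar>^2 + \<bar>m\<bar> * (?phi z * \<bar>z - m\<bar>^1))"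
      using integrable_normal_moment_abs[OF sd, of m 2] integrable_normal_moment_abs[OF sd, of m 1]
      by (intro Bochner_Integration.integrable_add integrable_mult_right) auto
    show "AE z in lborel. norm (?phi z * ((z - m) * gfun a gam z))
        \<le> norm (?phi z * \<bar>z - m\<bar>^2 + \<bar>m\<bar> * (?phi z * \<bar>z - m\<bar>^1))"
    proof (rule AE_I2)
      fix z
      have "\<bar>gfun a gam z\<bar> \<le> \<bar>z - m\<bar> + \<bar>m\<bar>" using abs_gfun[of gam a z] g by linarith
      then have "\<bar>z - m\<bar> * \<bar>gfun a gam z\<bar> \<le> \<bar>z - m\<bar> * (\<bar>z - m\<bar> + \<bar>m\<bar>)"
        by (rule mult_left_mono) simp
      then have "?phi z * (\<bar>z - m\<bar> * \<bar>gfun a gam z\<bar>) \<le> ?phi z * (\<bar>z - m\<bar> * (\<bar>z - m\<bar> + \<bar>m\<bar>))"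
        by (rule mult_left_mono) (rule phi0)
      moreover have "norm (?phi z * ((z - m) * gfun a gam z)) = ?phi z * (\<bar>z - m\<bar> * \<bar>gfun a gam z\<bar>)"
        using phi0[of z] by (simp add: abs_mult)
      moreover have "?phi z * \<bar>z - m\<bar>^2 + \<bar>m\<bar> * (?phi z * \<bar>z - m\<bar>^1) = ?phi z * (\<bar>z - m\<bar> * (\<bar>z - m\<bar> + \<bar>m\<bar>))"
        by (simp add: power2_eq_square algebra_simps)
      moreover have "?phi z * (\<bar>z - m\<bar> * (\<bar>z - m\<bar> + \<bar>m\<bar>)) \<ge> 0"
        using phi0[of z] by simp
      ultimately show "norm (?phi z * ((z - m) * gfun a gam z))
        \<le> norm (?phi z * \<bar>z - m\<bar>^2 + \<bar>m\<bar> * (?phi z * \<bar>z - m\<bar>^1))"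
        by simp
    qed
  qed simp
  show IQ: "integrable lborel (\<lambda>z. ?phi z * qfun a gam z)"
  proof (rule Bochner_Integration.integrable_bound)
    show "integrable lborel (\<lambda>z. (1 + gam * a) * ?phi z)"
      using integrable_normal_density[OF sd] by (intro integrable_mult_right) auto
    show "AE z in lborel. norm (?phi z * qfun a gam z) \<le> norm ((1 + gam * a) * ?phi z)"
    proof (rule AE_I2)
      fix z
      have "?phi z * \<bar>qfun a gam z\<bar> \<le> ?phi z * (1 + gam * a)"
        using qfun_bound[of gam a z] g a phi0[of z] by (intro mult_left_mono) auto
      then show "norm (?phi z * qfun a gam z) \<le> norm ((1 + gam * a) * ?phi z)"
        using phi0[of z] g a by (simp add: abs_mult algebra_simps)
    qed
  qed simp
  show "(\<integral>z. ?phi z * ((z - m) * gfun a gam z) \<partial>lborel) = sd^2 * (\<integral>z. ?phi z * qfun a gam z \<partial>lborel)"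
  proof -
    define Gp where "Gp z = z - gam * exp (- a * z)" for z
    define Gp' where "Gp' z = 1 + gam * (a / exp (a * z))" for z
    define Gm where "Gm z = z + gam * exp (a * z)" for z
    define Gm' where "Gm' z = 1 + gam * (a / exp (a * (- z)))" for z
    have cphi: "isCont ?phi x" for x using normal_density_deriv[OF sd] by (rule DERIV_isCont)
    have Psplit: "P z = indicator {t<..} z * (?phi z * (z - m) * Gp z) + indicator {..<-t} z * (?phi z * (z - m) * Gm z)" for z
    proof -
      consider "z > t" | "z < -t" | "\<bar>z\<bar> \<le> t" by linarith
      then show ?thesis
      proof cases
        case 1 then show ?thesis using t0 pos[OF 1] by (simp add: P_def Gp_def indicator_def)
      next
        case 2 then show ?thesis using t0 neg[OF 2] by (simp add: P_def Gm_def indicator_def)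
      next
        case 3 then show ?thesis using zero[of z] by (auto simp: P_def indicator_def)
      qed
    qed
    have Qsplit: "Q z = indicator {t<..} z * (?phi z * Gp' z) + indicator {..<-t} z * (?phi z * Gm' z)" for z
    proof -
      consider "z > t" | "z < -t" | "\<bar>z\<bar> \<le> t" by linarith
      then show ?thesis
      proof cases
        case 1 then show ?thesis using t0 zero[of z] by (simp add: Q_def qfun_def Gp'_def indicator_def)
      next
        case 2 then show ?thesis using t0 zero[of z] by (simp add: Q_def qfun_def Gm'_def indicator_def)
      next
        case 3 then show ?thesis using zero[of z] by (auto simp: Q_def qfun_def indicator_def)
      qed
    qed
    have indP1: "indicator {t<..} z * (?phi z * (z - m) * Gp z) = indicator {t<..} z * P z" for z
      using t0 by (auto simp: Psplit indicator_def)
    have indP2: "indicator {..<-t} z * (?phi z * (z - m) * Gm z) = indicator {..<-t} z * P z" for z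
      using t0 by (auto simp: Psplit indicator_def)
    have indQ1: "indicator {t<..} z * (?phi z * Gp' z) = indicator {t<..} z * Q z" for z
      using t0 by (auto simp: Qsplit indicator_def)
    have indQ2: "indicator {..<-t} z * (?phi z * Gm' z) = indicator {..<-t} z * Q z" for z
      using t0 by (auto simp: Qsplit indicator_def)
    have IP': "integrable lborel P" using IP unfolding P_def .
    have IQ': "integrable lborel Q" using IQ unfolding Q_def .
    have iP1: "integrable lborel (\<lambda>z. indicator {t<..} z * (?phi z * (z - m) * Gp z))"
      unfolding indP1 using integrable_mult_indicator[OF _ IP', of "{t<..}"] by simp
    have iP2: "integrable lborel (\<lambda>z. indicator {..<-t} z * (?phi z * (z - m) * Gm z))"
      unfolding indP2 using integrable_mult_indicator[OF _ IP', of "{..<-t}"] by simp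
    have iQ1: "integrable lborel (\<lambda>z. indicator {t<..} z * (?phi z * Gp' z))"
      unfolding indQ1 using integrable_mult_indicator[OF _ IQ', of "{t<..}"] by simp
    have iQ2: "integrable lborel (\<lambda>z. indicator {..<-t} z * (?phi z * Gm' z))"
      unfolding indQ2 using integrable_mult_indicator[OF _ IQ', of "{..<-t}"] by simp
    have R: "(LBINT z=ereal t..\<infinity>. ?phi z * (z - m) * Gp z) = sd^2 * (LBINT z=ereal t..\<infinity>. ?phi z * Gp' z)"
    proof (rule stein_piece[OF sd])
      show "ereal t < \<infinity>" by simp
      fix x
      show "(Gp has_real_derivative Gp' x) (at x)"
        unfolding Gp_def Gp'_def by (auto intro!: derivative_eq_intros simp: exp_minus field_simps)
      show "isCont Gp' x" unfolding Gp'_def[abs_def] by (intro continuous_intros) auto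
    next
      show "interval_lebesgue_integrable lborel (ereal t) \<infinity> (\<lambda>z. ?phi z * (z - m) * Gp z)"
        using iP1 by (simp add: int_right)
      show "interval_lebesgue_integrable lborel (ereal t) \<infinity> (\<lambda>z. ?phi z * Gp' z)"
        using iQ1 by (simp add: int_right)
      have "isCont (\<lambda>z. Gp z * ?phi z) t" unfolding Gp_def using cphi[of t] by (intro continuous_intros) auto
      then have "((\<lambda>z. Gp z * ?phi z) \<longlongrightarrow> Gp t * ?phi t) (at t)" by (simp add: isCont_def)
      moreover have "Gp t = 0" unfolding Gp_def using teq by linarith
      ultimately have "((\<lambda>z. Gp z * ?phi z) \<longlongrightarrow> 0) (at t)" by simp
      then have "((\<lambda>z. Gp z * ?phi z) \<longlongrightarrow> 0) (at_right t)"
        by (rule tendsto_within_subset[where S=UNIV]) (rule subset_UNIV)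
      then show "(((\<lambda>z. Gp z * ?phi z) \<circ> real_of_ereal) \<longlongrightarrow> 0) (at_right (ereal t))"
        by (simp add: ereal_tendsto_simps)
      have "((\<lambda>z. Gp z * ?phi z) \<longlongrightarrow> 0) at_top"
        using sd a unfolding Gp_def normal_density_def by real_asymp
      then show "(((\<lambda>z. Gp z * ?phi z) \<circ> real_of_ereal) \<longlongrightarrow> 0) (at_left \<infinity>)"
        by (simp add: ereal_tendsto_simps)
    qed
    have L: "(LBINT z=-\<infinity>..ereal (-t). ?phi z * (z - m) * Gm z) = sd^2 * (LBINT z=-\<infinity>..ereal (-t). ?phi z * Gm' z)"
    proof (rule stein_piece[OF sd])
      show "-\<infinity> < ereal (-t)" by simp
      fix x
      show "(Gm has_real_derivative Gm' x) (at x)"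
        unfolding Gm_def Gm'_def by (auto intro!: derivative_eq_intros simp: exp_minus field_simps)
      show "isCont Gm' x" unfolding Gm'_def[abs_def] by (intro continuous_intros) auto
    next
      show "interval_lebesgue_integrable lborel (-\<infinity>) (ereal (-t)) (\<lambda>z. ?phi z * (z - m) * Gm z)"
        using iP2 by (simp add: int_left)
      show "interval_lebesgue_integrable lborel (-\<infinity>) (ereal (-t)) (\<lambda>z. ?phi z * Gm' z)"
        using iQ2 by (simp add: int_left)
      have "isCont (\<lambda>z. Gm z * ?phi z) (-t)" unfolding Gm_def using cphi[of "-t"] by (intro continuous_intros) auto
      then have "((\<lambda>z. Gm z * ?phi z) \<longlongrightarrow> Gm (-t) * ?phi (-t)) (at (-t))" by (simp add: isCont_def)
      moreover have "Gm (-t) = 0"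
      proof -
        have "gam * exp (a * - t) = gam * exp (- a * t)" by simp
        then show ?thesis unfolding Gm_def using teq by linarith
      qed
      ultimately have "((\<lambda>z. Gm z * ?phi z) \<longlongrightarrow> 0) (at (-t))" by simp
      then have "((\<lambda>z. Gm z * ?phi z) \<longlongrightarrow> 0) (at_left (-t))"
        by (rule tendsto_within_subset[where S=UNIV]) (rule subset_UNIV)
      then show "(((\<lambda>z. Gm z * ?phi z) \<circ> real_of_ereal) \<longlongrightarrow> 0) (at_left (ereal (-t)))"
        by (simp add: ereal_tendsto_simps)
      have "((\<lambda>z. Gm z * ?phi z) \<longlongrightarrow> 0) at_bot"
        using sd a unfolding Gm_def normal_density_def by real_asymp
      then show "(((\<lambda>z. Gm z * ?phi z) \<circ> real_of_ereal) \<longlongrightarrow> 0) (at_right (-\<infinity>))"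
        by (simp add: ereal_tendsto_simps)
    qed
    have "(\<integral>z. P z \<partial>lborel) = (\<integral>z. indicator {t<..} z * (?phi z * (z - m) * Gp z) + indicator {..<-t} z * (?phi z * (z - m) * Gm z) \<partial>lborel)"
      by (simp only: Psplit)
    also have "\<dots> = (LBINT z=ereal t..\<infinity>. ?phi z * (z - m) * Gp z) + (LBINT z=-\<infinity>..ereal (-t). ?phi z * (z - m) * Gm z)"
      unfolding LBINT_right LBINT_left using iP1 iP2 by (rule Bochner_Integration.integral_add)
    also have "\<dots> = sd^2 * ((LBINT z=ereal t..\<infinity>. ?phi z * Gp' z) + (LBINT z=-\<infinity>..ereal (-t). ?phi z * Gm' z))"
      unfolding R L by (simp add: algebra_simps)
    also have "(LBINT z=ereal t..\<infinity>. ?phi z * Gp' z) + (LBINT z=-\<infinity>..ereal (-t). ?phi z * Gm' z)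
        = (\<integral>z. indicator {t<..} z * (?phi z * Gp' z) + indicator {..<-t} z * (?phi z * Gm' z) \<partial>lborel)"
      unfolding LBINT_right LBINT_left using iQ1 iQ2 by (rule Bochner_Integration.integral_add[symmetric])
    also have "\<dots> = (\<integral>z. Q z \<partial>lborel)"
      by (simp only: Qsplit)
    finally show ?thesis unfolding P_def Q_def .
  qed
qed

lemma prod_bound:
  fixes a gz zz m :: real
  assumes "\<bar>gz\<bar> \<le> \<bar>zz\<bar>"
  shows "\<bar>a * gz\<bar> \<le> a^2 + 2 * (zz - m)^2 + 2 * m^2"
proof -
  have 1: "2 * (\<bar>a\<bar> * \<bar>gz\<bar>) \<le> a^2 + gz^2"
  proof -
    have "0 \<le> (\<bar>a\<bar> - \<bar>gz\<bar>)^2" by simp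
    then show ?thesis by (simp add: power2_eq_square algebra_simps)
  qed
  have 2: "gz^2 \<le> zz^2" using assms by (metis abs_le_square_iff)
  have 3: "zz^2 \<le> 2 * (zz - m)^2 + 2 * m^2"
  proof -
    have "0 \<le> (zz - 2 * m)^2" by simp
    then show ?thesis by (simp add: power2_eq_square algebra_simps)
  qed
  have 4: "0 \<le> a^2" by simp
  have "\<bar>a * gz\<bar> = \<bar>a\<bar> * \<bar>gz\<bar>" by (simp add: abs_mult)
  then show ?thesis using 1 2 3 4 by linarith
qed

lemma Z_sum: "(transpose X *v y) $ j = (\<Sum>i\<in>UNIV. X $ i $ j * y $ i)"
  by (simp add: matrix_vector_mult_def transpose_def)

lemma XX_col: 
  fixes X :: "real^'p^'n"
  assumes "transpose X ** X = mat 1"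
  shows "(\<Sum>i\<in>UNIV. (X $ i $ j)^2) = 1"
proof -
  have "(transpose X ** X) $ j $ j = 1" using assms by (simp add: mat_def)
  then show ?thesis by (simp add: matrix_matrix_mult_def transpose_def power2_eq_square)
qed

theorem corollaryS1:
  fixes X :: "real^'p^'n" and beta :: "real^'p"
    and sd alpha gamma :: real
    and betahat :: "real^'n \<Rightarrow> real^'p"
  assumes "transpose X ** X = mat 1"
    and "sd > 0" and "alpha > 0" and "gamma > 0"
    and "\<And>y b. alasso_obj X alpha gamma y (betahat y) \<le> alasso_obj X alpha gamma y b"
  shows "integrable (gauss_meas (X *v beta) sd) (df_hat X alpha gamma betahat)
    \<and> (LINT y|gauss_meas (X *v beta) sd. df_hat X alpha gamma betahat y)
        = dof (gauss_meas (X *v beta) sd) sd (\<lambda>y. X *v betahat y)"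
proof -
  note XX = assms(1) and sd = assms(2) and al = assms(3) and ga = assms(4) and opt = assms(5)
  define mu where "mu = X *v beta"
  define M where "M = gauss_meas mu sd"
  interpret P: prob_space M unfolding M_def by (rule prob_gauss[OF sd])
  have sM[measurable_cong]: "sets M = sets borel" by (simp add: M_def)
  define Z where "Z j y = (transpose X *v y) $ j" for j y
  define m where "m j = (transpose X *v mu) $ j" for j
  have Zs: "Z j = (\<lambda>y. \<Sum>i\<in>UNIV. X $ i $ j * y $ i)" for j
    unfolding Z_def by (simp only: Z_sum)
  have Zm[measurable]: "Z j \<in> borel_measurable M" for j
    unfolding Zs M_def by measurable
  have Zdist: "distributed M lborel (Z j) (\<lambda>x. ennreal (normal_density (m j) sd x))" for j
    using lin_normal[OF sd XX_col[OF XX, of j], of mu] unfolding Zs M_def m_def Z_sum .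
  have Ydist: "distributed M lborel (\<lambda>y. y $ i) (\<lambda>x. ennreal (normal_density (mu $ i) sd x))" for i
    unfolding M_def by (rule distributed_gauss_comp[OF sd])
  have bh: "betahat y $ j = gfun alpha gamma (Z j y)" for y j
    unfolding Z_def gfun_def by (rule betahat_soft[OF XX ga opt])
  have dfh: "df_hat X alpha gamma betahat y = (\<Sum>j\<in>UNIV. qfun alpha gamma (Z j y))" for y
  proof -
    have A: "active_set (betahat y) = {j. gfun alpha gamma (Z j y) \<noteq> 0}"
      by (simp add: active_set_def bh)
    have "(\<Sum>j\<in>UNIV. qfun alpha gamma (Z j y))
        = (\<Sum>j\<in>{j. gfun alpha gamma (Z j y) \<noteq> 0}. 1 + gamma * (alpha / exp (alpha * \<bar>Z j y\<bar>)))"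
      unfolding qfun_def by (simp add: sum.If_cases Int_def)
    also have "\<dots> = real (card {j. gfun alpha gamma (Z j y) \<noteq> 0})
        + gamma * (\<Sum>j\<in>{j. gfun alpha gamma (Z j y) \<noteq> 0}. alpha / exp (alpha * \<bar>Z j y\<bar>))"
      by (simp add: sum.distrib sum_distrib_left)
    finally show ?thesis
      unfolding df_hat_def A by (simp add: beta_LS_def Z_def)
  qed
  have Xbh: "(X *v betahat y) $ i = (\<Sum>j\<in>UNIV. X $ i $ j * gfun alpha gamma (Z j y))" for y i
    by (simp add: matrix_vector_mult_def bh)
  have phi0: "\<And>x. 0 \<le> normal_density mm sd x" for mm by (rule normal_density_nonneg)
  have IQ: "integrable M (\<lambda>y. qfun alpha gamma (Z j y))" for j
    using stein_full(2)[OF sd al ga, of "m j"]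
    by (subst distributed_integrable[OF Zdist, of "qfun alpha gamma", symmetric]) (auto simp: phi0)
  have EQ: "(\<integral>y. qfun alpha gamma (Z j y) \<partial>M) = (\<integral>z. normal_density (m j) sd z * qfun alpha gamma z \<partial>lborel)" for j
    by (subst distributed_integral[OF Zdist, of "qfun alpha gamma"]) (auto simp: phi0)
  have IPj: "integrable M (\<lambda>y. (Z j y - m j) * gfun alpha gamma (Z j y))" for j
    using stein_full(1)[OF sd al ga, of "m j"]
    by (subst distributed_integrable[OF Zdist, of "\<lambda>z. (z - m j) * gfun alpha gamma z", symmetric]) (auto simp: phi0)
  have EP: "(\<integral>y. (Z j y - m j) * gfun alpha gamma (Z j y) \<partial>M) = sd^2 * (\<integral>y. qfun alpha gamma (Z j y) \<partial>M)" for j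
  proof -
    have "(\<integral>y. (Z j y - m j) * gfun alpha gamma (Z j y) \<partial>M)
        = (\<integral>z. normal_density (m j) sd z * ((z - m j) * gfun alpha gamma z) \<partial>lborel)"
      by (subst distributed_integral[OF Zdist, of "\<lambda>z. (z - m j) * gfun alpha gamma z"]) (auto simp: phi0)
    also have "\<dots> = sd^2 * (\<integral>z. normal_density (m j) sd z * qfun alpha gamma z \<partial>lborel)"
      by (rule stein_full(3)[OF sd al ga])
    finally show ?thesis by (simp add: EQ)
  qed
  have IY2: "integrable M (\<lambda>y. (y $ i - mu $ i)^2)" for i
    using integrable_normal_moment[OF sd, of "mu $ i" 2]
    by (subst distributed_integrable[OF Ydist, of "\<lambda>x. (x - mu $ i)^2", symmetric]) (auto simp: phi0)
  have IZ2: "integrable M (\<lambda>y. (Z j y - m j)^2)" for j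
    using integrable_normal_moment[OF sd, of "m j" 2]
    by (subst distributed_integrable[OF Zdist, of "\<lambda>x. (x - m j)^2", symmetric]) (auto simp: phi0)
  have IY: "integrable M (\<lambda>y. y $ i)" for i
    using integrable_normal_moment_nz_1[OF sd, of "mu $ i"]
    by (subst distributed_integrable[OF Ydist, of "\<lambda>x. x", symmetric]) (auto simp: phi0)
  have EY: "(\<integral>y. y $ i \<partial>M) = mu $ i" for i
    using P.normal_distributed_expectation[OF sd Ydist[of i]] by simp
  have IYg: "integrable M (\<lambda>y. (y $ i - mu $ i) * gfun alpha gamma (Z j y))" for i j
  proof (rule Bochner_Integration.integrable_bound)
    show "integrable M (\<lambda>y. (y $ i - mu $ i)^2 + 2 * (Z j y - m j)^2 + 2 * (m j)^2)"
      using IY2[of i] IZ2[of j] by (intro Bochner_Integration.integrable_add integrable_mult_right) auto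
    show "AE y in M. norm ((y $ i - mu $ i) * gfun alpha gamma (Z j y))
        \<le> norm ((y $ i - mu $ i)^2 + 2 * (Z j y - m j)^2 + 2 * (m j)^2)"
    proof (rule AE_I2)
      fix y
      have "\<bar>(y $ i - mu $ i) * gfun alpha gamma (Z j y)\<bar> \<le> (y $ i - mu $ i)^2 + 2 * (Z j y - m j)^2 + 2 * (m j)^2"
        by (rule prod_bound) (rule abs_gfun, use ga in simp)
      then show "norm ((y $ i - mu $ i) * gfun alpha gamma (Z j y))
        \<le> norm ((y $ i - mu $ i)^2 + 2 * (Z j y - m j)^2 + 2 * (m j)^2)" by simp
    qed
  next
    have "(\<lambda>y. y $ i) \<in> borel_measurable M" by (simp add: measurable_cong_sets[OF sM refl])
    then show "(\<lambda>y. (y $ i - mu $ i) * gfun alpha gamma (Z j y)) \<in> borel_measurable M"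
      by measurable
  qed
  have cov: "covar M (\<lambda>y. y $ i) (\<lambda>y. (X *v betahat y) $ i)
      = (\<Sum>j\<in>UNIV. X $ i $ j * (\<integral>y. (y $ i - mu $ i) * gfun alpha gamma (Z j y) \<partial>M))" for i
  proof -
    define V where "V y = (\<Sum>j\<in>UNIV. X $ i $ j * gfun alpha gamma (Z j y))" for y
    define c where "c = (\<integral>y. V y \<partial>M)"
    have IV: "integrable M (\<lambda>y. (y $ i - mu $ i) * V y)"
      unfolding V_def sum_distrib_left
      using IYg by (intro Bochner_Integration.integrable_sum) (auto simp: mult.left_commute intro: integrable_mult_right)
    have ID: "integrable M (\<lambda>y. y $ i - mu $ i)"
      using IY[of i] by (intro Bochner_Integration.integrable_diff) auto
    have "covar M (\<lambda>y. y $ i) (\<lambda>y. (X *v betahat y) $ i) = (\<integral>y. (y $ i - mu $ i) * (V y - c) \<partial>M)"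
      unfolding covar_def Xbh EY V_def c_def ..
    also have "\<dots> = (\<integral>y. (y $ i - mu $ i) * V y - c * (y $ i - mu $ i) \<partial>M)"
      by (simp add: algebra_simps)
    also have "\<dots> = (\<integral>y. (y $ i - mu $ i) * V y \<partial>M) - c * (\<integral>y. (y $ i - mu $ i) \<partial>M)"
      using IV ID by simp
    also have "(\<integral>y. (y $ i - mu $ i) \<partial>M) = 0"
      using IY[of i] EY[of i] by (simp add: Bochner_Integration.integral_diff P.prob_space)
    also have "(\<integral>y. (y $ i - mu $ i) * V y \<partial>M)
        = (\<Sum>j\<in>UNIV. X $ i $ j * (\<integral>y. (y $ i - mu $ i) * gfun alpha gamma (Z j y) \<partial>M))"
    proof -
      have "(\<integral>y. (y $ i - mu $ i) * V y \<partial>M)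
          = (\<integral>y. (\<Sum>j\<in>UNIV. X $ i $ j * ((y $ i - mu $ i) * gfun alpha gamma (Z j y))) \<partial>M)"
        unfolding V_def sum_distrib_left by (simp add: mult.left_commute)
      also have "\<dots> = (\<Sum>j\<in>UNIV. (\<integral>y. X $ i $ j * ((y $ i - mu $ i) * gfun alpha gamma (Z j y)) \<partial>M))"
        using IYg by (intro Bochner_Integration.integral_sum) auto
      finally show ?thesis by simp
    qed
    finally show ?thesis by simp
  qed
  have sumcov: "(\<Sum>i\<in>UNIV. covar M (\<lambda>y. y $ i) (\<lambda>y. (X *v betahat y) $ i))
      = (\<Sum>j\<in>UNIV. \<integral>y. (Z j y - m j) * gfun alpha gamma (Z j y) \<partial>M)"
  proof -
    have "(\<Sum>i\<in>UNIV. covar M (\<lambda>y. y $ i) (\<lambda>y. (X *v betahat y) $ i))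
        = (\<Sum>j\<in>UNIV. \<Sum>i\<in>UNIV. X $ i $ j * (\<integral>y. (y $ i - mu $ i) * gfun alpha gamma (Z j y) \<partial>M))"
      unfolding cov by (rule sum.swap)
    also have "\<dots> = (\<Sum>j\<in>UNIV. \<integral>y. (Z j y - m j) * gfun alpha gamma (Z j y) \<partial>M)"
    proof (rule sum.cong[OF refl])
      fix j
      have Zm_eq: "Z j y - m j = (\<Sum>i\<in>UNIV. X $ i $ j * (y $ i - mu $ i))" for y
        unfolding Zs m_def Z_sum by (simp add: sum_subtractf algebra_simps)
      have "(\<Sum>i\<in>UNIV. X $ i $ j * (\<integral>y. (y $ i - mu $ i) * gfun alpha gamma (Z j y) \<partial>M))
          = (\<Sum>i\<in>UNIV. (\<integral>y. X $ i $ j * ((y $ i - mu $ i) * gfun alpha gamma (Z j y)) \<partial>M))"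
        by simp
      also have "\<dots> = (\<integral>y. (\<Sum>i\<in>UNIV. X $ i $ j * ((y $ i - mu $ i) * gfun alpha gamma (Z j y))) \<partial>M)"
        using IYg by (intro Bochner_Integration.integral_sum[symmetric]) auto
      also have "\<dots> = (\<integral>y. (Z j y - m j) * gfun alpha gamma (Z j y) \<partial>M)"
        unfolding Zm_eq sum_distrib_right by (simp add: mult.assoc)
      finally show "(\<Sum>i\<in>UNIV. X $ i $ j * (\<integral>y. (y $ i - mu $ i) * gfun alpha gamma (Z j y) \<partial>M))
          = (\<integral>y. (Z j y - m j) * gfun alpha gamma (Z j y) \<partial>M)" .
    qed
    finally show ?thesis .
  qed
  have Idf: "integrable M (df_hat X alpha gamma betahat)"
    unfolding dfh[abs_def] using IQ by (intro Bochner_Integration.integrable_sum) auto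
  have Edf: "(\<integral>y. df_hat X alpha gamma betahat y \<partial>M) = (\<Sum>j\<in>UNIV. \<integral>y. qfun alpha gamma (Z j y) \<partial>M)"
    unfolding dfh using IQ by (intro Bochner_Integration.integral_sum) auto
  have "dof M sd (\<lambda>y. X *v betahat y) = (1 / sd^2) * (\<Sum>j\<in>UNIV. sd^2 * (\<integral>y. qfun alpha gamma (Z j y) \<partial>M))"
    unfolding dof_def sumcov EP ..
  also have "\<dots> = (\<integral>y. df_hat X alpha gamma betahat y \<partial>M)"
    using sd by (simp add: Edf sum_distrib_left[symmetric])
  finally show ?thesis using Idf unfolding M_def mu_def by simp
qed

end
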